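(* Let $\mathbb{G},\mathbb{M}$ be graded groups, $T:\mathbb{G}\to\mathbb{M}$ an injective h-homomorphism and $H=T(\mathbb{G})$. The following are equivalent: (1) there exists a normal homogeneous subgroup $N$ of $\mathbb{M}$ complementary to $H$; (2) there exists an h-epimorphism $p:\mathbb{M}\to H$ with $p|_H=\mathrm{Id}_H$; (3) $T$ is an h-monomorphism.
   Context: Graded group: connected simply connected real Lie group with Lie algebra $V_1\oplus\cdots\oplus V_\iota$, $[V_i,V_j]\subset V_{i+j}$; dilations act by $r^i$ on $V_i$. h-homomorphism: group homomorphism commuting with dilations; h-epimorphism (resp. h-monomorphism): h-homomorphism having a right (resp. left) inverse which is an h-homomorphism. Homogeneous subgroup: closed connected simply connected Lie subgroup invariant under dilations (image $H$ is a homogeneous subgroup, itself a graded group). $N,H$ complementary: $NH=\mathbb{M}$ and $N\cap H=\{e\}$. *)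

theory Defs
  imports "HOL-Analysis.Analysis" "HOL-Algebra.Group" "HOL-Algebra.Coset"
begin

fun iter_dderiv :: "'a::euclidean_space list \<Rightarrow> ('a \<Rightarrow> 'b::euclidean_space) \<Rightarrow> 'a \<Rightarrow> 'b" where
  "iter_dderiv [] f = f"
| "iter_dderiv (v # vs) f = (\<lambda>x. frechet_derivative (iter_dderiv vs f) (at x) v)"

definition smooth_map :: "('a::euclidean_space \<Rightarrow> 'b::euclidean_space) \<Rightarrow> bool" where
  "smooth_map f \<longleftrightarrow> (\<forall>vs x. iter_dderiv vs f differentiable (at x))"

text \<open>A graded group in exponential coordinates: a Lie group structure (smooth group law)
  on the finite-dimensional real vector space 'g, together with a decomposition
  'g = V_1 + ... + V_iota given by linear projections P i, such that the dilations
  delta r = sum_i r^i P_i are group automorphisms for r > 0.\<close>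

definition graded_group :: "'g::euclidean_space monoid \<Rightarrow> (real \<Rightarrow> 'g \<Rightarrow> 'g) \<Rightarrow> bool" where
  "graded_group G \<delta> \<longleftrightarrow>
     group G \<and> carrier G = UNIV \<and>
     smooth_map (\<lambda>(x, y). x \<otimes>\<^bsub>G\<^esub> y) \<and> smooth_map (\<lambda>x. inv\<^bsub>G\<^esub> x) \<and>
     (\<exists>(\<iota>::nat) (P :: nat \<Rightarrow> 'g \<Rightarrow> 'g).
        (\<forall>i. linear (P i)) \<and>
        (\<forall>i j x. P i (P j x) = (if i = j then P i x else 0)) \<and>
        (\<forall>x. (\<Sum>i\<in>{1..\<iota>}. P i x) = x) \<and>
        (\<forall>r x. \<delta> r x = (\<Sum>i\<in>{1..\<iota>}. (r ^ i) *\<^sub>R P i x))) \<and>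
     (\<forall>r>0. \<delta> r \<in> hom G G)"

definition h_hom :: "'a::euclidean_space monoid \<Rightarrow> (real \<Rightarrow> 'a \<Rightarrow> 'a) \<Rightarrow>
    'b::euclidean_space monoid \<Rightarrow> (real \<Rightarrow> 'b \<Rightarrow> 'b) \<Rightarrow> ('a \<Rightarrow> 'b) \<Rightarrow> bool" where
  "h_hom G \<delta>G M \<delta>M f \<longleftrightarrow> f \<in> hom G M \<and> continuous_on (carrier G) f \<and>
     (\<forall>r>0. \<forall>x\<in>carrier G. f (\<delta>G r x) = \<delta>M r (f x))"

definition h_epi :: "'a::euclidean_space monoid \<Rightarrow> (real \<Rightarrow> 'a \<Rightarrow> 'a) \<Rightarrow>
    'b::euclidean_space monoid \<Rightarrow> (real \<Rightarrow> 'b \<Rightarrow> 'b) \<Rightarrow> ('a \<Rightarrow> 'b) \<Rightarrow> bool" where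
  "h_epi G \<delta>G M \<delta>M f \<longleftrightarrow> h_hom G \<delta>G M \<delta>M f \<and>
     (\<exists>g. h_hom M \<delta>M G \<delta>G g \<and> (\<forall>y\<in>carrier M. f (g y) = y))"

definition h_mono :: "'a::euclidean_space monoid \<Rightarrow> (real \<Rightarrow> 'a \<Rightarrow> 'a) \<Rightarrow>
    'b::euclidean_space monoid \<Rightarrow> (real \<Rightarrow> 'b \<Rightarrow> 'b) \<Rightarrow> ('a \<Rightarrow> 'b) \<Rightarrow> bool" where
  "h_mono G \<delta>G M \<delta>M f \<longleftrightarrow> h_hom G \<delta>G M \<delta>M f \<and>
     (\<exists>g. h_hom M \<delta>M G \<delta>G g \<and> (\<forall>x\<in>carrier G. g (f x) = x))"

text \<open>Homogeneous subgroup: closed connected simply connected subgroup invariant under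
  dilations (closed subgroups of Lie groups are embedded Lie subgroups).\<close>

definition homogeneous_subgroup :: "'g::euclidean_space monoid \<Rightarrow> (real \<Rightarrow> 'g \<Rightarrow> 'g) \<Rightarrow> 'g set \<Rightarrow> bool" where
  "homogeneous_subgroup M \<delta> S \<longleftrightarrow> subgroup S M \<and> closed S \<and> connected S \<and>
     simply_connected S \<and> (\<forall>r>0. \<delta> r ` S \<subseteq> S)"

definition complementary :: "'g monoid \<Rightarrow> 'g set \<Rightarrow> 'g set \<Rightarrow> bool" where
  "complementary M N H \<longleftrightarrow> N <#>\<^bsub>M\<^esub> H = carrier M \<and> N \<inter> H = {\<one>\<^bsub>M\<^esub>}"

end

theory Submission
  imports Defs
begin

lemma smooth_cont: "smooth_map f \<Longrightarrow> continuous_on UNIV f"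
  unfolding smooth_map_def
  by (metis iter_dderiv.simps(1) continuous_at_imp_continuous_on differentiable_imp_continuous_within)

lemma cont_mult_comp:
  assumes "continuous_on UNIV (\<lambda>(x,y). m x y)" "continuous_on S F" "continuous_on S Gf"
  shows "continuous_on S (\<lambda>z. m (F z) (Gf z))"
proof -
  have "continuous_on S ((\<lambda>(x,y). m x y) \<circ> (\<lambda>z. (F z, Gf z)))"
    by (rule continuous_on_compose[OF continuous_on_Pair[OF assms(2,3)]])
       (rule continuous_on_subset[OF assms(1)], simp)
  then show ?thesis by (simp add: o_def)
qed

lemma gg_facts:
  assumes "graded_group G \<delta>"
  shows "group G" "carrier G = UNIV"
    "continuous_on UNIV (\<lambda>(x,y). x \<otimes>\<^bsub>G\<^esub> y)" "continuous_on UNIV (\<lambda>x. inv\<^bsub>G\<^esub> x)"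
    "\<And>r. r > 0 \<Longrightarrow> \<delta> r \<in> hom G G"
    "\<And>x. \<delta> 1 x = x"
    "\<And>x. continuous_on S (\<lambda>r. \<delta> r x)"
    "\<exists>C>0. \<forall>r x. 0 < r \<longrightarrow> r \<le> 1 \<longrightarrow> norm (\<delta> r x) \<le> r * C * norm x"
proof -
  show "group G" "carrier G = UNIV" "continuous_on UNIV (\<lambda>(x,y). x \<otimes>\<^bsub>G\<^esub> y)"
    "continuous_on UNIV (\<lambda>x. inv\<^bsub>G\<^esub> x)" "\<And>r. r > 0 \<Longrightarrow> \<delta> r \<in> hom G G"
    using assms smooth_cont unfolding graded_group_def by blast+
  obtain \<iota> :: nat and P where lin: "\<forall>i. linear (P i)"
    and sumP: "\<forall>x. (\<Sum>i\<in>{1..\<iota>}. P i x) = x"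
    and dl: "\<forall>r x. \<delta> r x = (\<Sum>i\<in>{1..\<iota>}. (r ^ i) *\<^sub>R P i x)"
    using assms unfolding graded_group_def by blast
  show "\<delta> 1 x = x" for x using dl sumP by simp
  show "continuous_on S (\<lambda>r. \<delta> r x)" for x
    unfolding dl[rule_format] by (intro continuous_intros)
  have "\<forall>i. \<exists>B>0. \<forall>x. norm (P i x) \<le> B * norm x"
    using lin linear_bounded_pos by metis
  then obtain B where B: "\<And>i. B i > 0" "\<And>i x. norm (P i x) \<le> B i * norm x"
    by metis
  define C where "C = 1 + (\<Sum>i\<in>{1..\<iota>}. B i)"
  have Cpos: "C > 0" unfolding C_def using B(1) by (simp add: add_pos_nonneg sum_nonneg less_imp_le)
  have "norm (\<delta> r x) \<le> r * C * norm x" if r: "0 < r" "r \<le> 1" for r x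
  proof -
    have "norm (\<delta> r x) \<le> (\<Sum>i\<in>{1..\<iota>}. norm ((r ^ i) *\<^sub>R P i x))"
      unfolding dl[rule_format] by (rule norm_sum)
    also have "\<dots> \<le> (\<Sum>i\<in>{1..\<iota>}. r * (B i * norm x))"
    proof (rule sum_mono)
      fix i assume "i \<in> {1..\<iota>}"
      then have "r ^ i \<le> r ^ 1" using r by (intro power_decreasing) auto
      then have "r ^ i \<le> r" by simp
      moreover have "0 \<le> r ^ i" using r by simp
      ultimately show "norm ((r ^ i) *\<^sub>R P i x) \<le> r * (B i * norm x)"
        using B(2)[of i x] r by (simp add: mult_mono)
    qed
    also have "\<dots> = r * (\<Sum>i\<in>{1..\<iota>}. B i) * norm x"
      by (simp add: sum_distrib_left sum_distrib_right mult.assoc)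
    also have "\<dots> \<le> r * C * norm x"
      unfolding C_def using r by (intro mult_right_mono mult_left_mono) auto
    finally show ?thesis .
  qed
  then show "\<exists>C>0. \<forall>r x. 0 < r \<longrightarrow> r \<le> 1 \<longrightarrow> norm (\<delta> r x) \<le> r * C * norm x"
    using Cpos by blast
qed

lemma gg_one:
  assumes "graded_group G \<delta>"
  shows "\<one>\<^bsub>G\<^esub> = 0"
proof -
  have grp: "group G" using gg_facts[OF assms] by simp
  obtain C where C: "C > 0" "\<And>r x. 0 < r \<Longrightarrow> r \<le> 1 \<Longrightarrow> norm (\<delta> r x) \<le> r * C * norm x"
    using gg_facts(8)[OF assms] by blast
  define r where "r = min 1 (1 / (2 * C))"
  have r: "0 < r" "r \<le> 1" "r * C \<le> 1/2" using C(1) unfolding r_def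
    by (auto simp: min_def field_simps)
  have "\<delta> r \<one>\<^bsub>G\<^esub> = \<one>\<^bsub>G\<^esub>"
    using gg_facts(5)[OF assms r(1)] grp by (intro group_hom.hom_one) (auto simp: group_hom_def group_hom_axioms_def)
  then have "norm \<one>\<^bsub>G\<^esub> \<le> r * C * norm \<one>\<^bsub>G\<^esub>" using C(2)[OF r(1,2), of "\<one>\<^bsub>G\<^esub>"] by simp
  also have "\<dots> \<le> 1/2 * norm \<one>\<^bsub>G\<^esub>" using r(3) by (intro mult_right_mono) auto
  finally show ?thesis by simp
qed


lemma inv_cont_at0:
  fixes f :: "'a::euclidean_space \<Rightarrow> 'b::euclidean_space"
    and dA :: "real \<Rightarrow> 'a \<Rightarrow> 'a" and dB :: "real \<Rightarrow> 'b \<Rightarrow> 'b"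
  assumes S: "closed S" "0 \<in> S" and fc: "continuous_on S f" and inj: "inj_on f S" and f0: "f 0 = 0"
   and dS: "\<And>r x. 0<r \<Longrightarrow> r\<le>1 \<Longrightarrow> x\<in>S \<Longrightarrow> dA r x \<in> S"
   and fd: "\<And>r x. 0<r \<Longrightarrow> r\<le>1 \<Longrightarrow> x\<in>S \<Longrightarrow> f (dA r x) = dB r (f x)"
   and dc: "\<And>x. x\<in>S \<Longrightarrow> continuous_on {0<..1} (\<lambda>r. dA r x)"
   and d1: "\<And>x. dA 1 x = x"
   and CA: "CA > 0" "\<And>r x. 0<r \<Longrightarrow> r\<le>1 \<Longrightarrow> norm (dA r x) \<le> r*CA*norm x"
   and CB: "CB > 0" "\<And>r y. 0<r \<Longrightarrow> r\<le>1 \<Longrightarrow> norm (dB r y) \<le> CB*norm y"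
   and e: "\<epsilon> > 0"
  shows "\<exists>d>0. \<forall>x\<in>S. norm (f x) < d \<longrightarrow> norm x < \<epsilon>"
proof -
  define K where "K = S \<inter> sphere 0 \<epsilon>"
  have cK: "compact K" unfolding K_def using S(1) by auto
  obtain m where m: "m > 0" "\<And>s. s \<in> K \<Longrightarrow> m \<le> norm (f s)"
  proof (cases "K = {}")
    case True then show ?thesis using that[of 1] by auto
  next
    case False
    have "continuous_on K (\<lambda>s. norm (f s))"
      using fc unfolding K_def by (intro continuous_intros) (auto intro: continuous_on_subset)
    then obtain s0 where s0: "s0 \<in> K" "\<And>s. s \<in> K \<Longrightarrow> norm (f s0) \<le> norm (f s)"
      using continuous_attains_inf[OF cK False] by blast
    have "s0 \<noteq> 0" using s0(1) e unfolding K_def by auto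
    moreover have "s0 \<in> S" using s0(1) unfolding K_def by auto
    ultimately have "f s0 \<noteq> 0" using inj S(2) f0 by (metis inj_on_def)
    then show ?thesis using that[of "norm (f s0)"] s0 by auto
  qed
  show ?thesis
  proof (intro exI[of _ "m / CB"] conjI ballI impI)
    show "m / CB > 0" using m CB by simp
    fix x assume x: "x \<in> S" "norm (f x) < m / CB"
    show "norm x < \<epsilon>"
    proof (rule ccontr)
      assume "\<not> norm x < \<epsilon>"
      then have nx: "norm x \<ge> \<epsilon>" by simp
      then have nxp: "norm x > 0" using e by linarith
      define a where "a = min 1 (\<epsilon> / (2 * CA * norm x))"
      have a: "0 < a" "a \<le> 1" "a * CA * norm x \<le> \<epsilon>/2"
        using e CA(1) nxp unfolding a_def by (auto simp: min_def field_simps)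
      have "norm (dA a x) \<le> \<epsilon>" using CA(2)[OF a(1,2), of x] a(3) e by simp
      moreover have "\<epsilon> \<le> norm (dA 1 x)" using d1 nx by simp
      moreover have "continuous_on {a..1} (\<lambda>r. norm (dA r x))"
        using dc[OF x(1)] a by (intro continuous_intros) (auto intro: continuous_on_subset)
      ultimately obtain r where r: "a \<le> r" "r \<le> 1" "norm (dA r x) = \<epsilon>"
        using IVT'[of "\<lambda>r. norm (dA r x)" a \<epsilon> 1] a by auto
      have rp: "0 < r" using r a by simp
      have "dA r x \<in> K" unfolding K_def using dS[OF rp r(2) x(1)] r(3) by simp
      then have "m \<le> norm (f (dA r x))" by (rule m(2))
      also have "\<dots> = norm (dB r (f x))" using fd[OF rp r(2) x(1)] by simp
      also have "\<dots> \<le> CB * norm (f x)" using CB(2)[OF rp r(2)] .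
      also have "\<dots> < CB * (m / CB)" using x(2) CB(1) by (simp add: field_simps)
      also have "\<dots> = m" using CB(1) by simp
      finally show False by simp
    qed
  qed
qed

lemma inv_cont_gen:
  fixes f :: "'a::real_normed_vector \<Rightarrow> 'b::real_normed_vector"
  assumes inj: "inj_on f S"
   and at0: "\<And>\<epsilon>. \<epsilon>>0 \<Longrightarrow> \<exists>d>0. \<forall>u\<in>S. norm (f u) < d \<longrightarrow> norm u < \<epsilon>"
   and loc: "\<And>x0. x0\<in>S \<Longrightarrow> \<exists>a b. continuous (at (f x0)) a \<and> a (f x0) = 0 \<and> continuous (at 0) b \<and> b 0 = x0 \<and> (\<forall>x\<in>S. \<exists>u\<in>S. f u = a (f x) \<and> x = b u)"
  shows "continuous_on (f ` S) (inv_into S f)"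
  unfolding continuous_on_iff
proof (intro ballI allI impI)
  fix y e assume y: "y \<in> f ` S" and e: "(0::real) < e"
  then obtain x0 where x0: "x0 \<in> S" "y = f x0" by auto
  obtain a b where ab: "continuous (at (f x0)) a" "a (f x0) = 0" "continuous (at 0) b" "b 0 = x0"
     "\<forall>x\<in>S. \<exists>u\<in>S. f u = a (f x) \<and> x = b u"
    using loc[OF x0(1)] by blast
  obtain \<epsilon> where eps: "\<epsilon> > 0" "\<And>u. dist u 0 < \<epsilon> \<Longrightarrow> dist (b u) x0 < e"
    using ab(3,4) e unfolding continuous_at_eps_delta by metis
  obtain d1 where d1: "d1 > 0" "\<forall>u\<in>S. norm (f u) < d1 \<longrightarrow> norm u < \<epsilon>"
    using at0[OF eps(1)] by blast
  obtain d where d: "d > 0" "\<And>y'. dist y' (f x0) < d \<Longrightarrow> dist (a y') 0 < d1"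
    using ab(1,2) d1(1) unfolding continuous_at_eps_delta by metis
  show "\<exists>d>0. \<forall>x'\<in>f ` S. dist x' y < d \<longrightarrow> dist (inv_into S f x') (inv_into S f y) < e"
  proof (intro exI[of _ d] conjI ballI impI)
    show "d > 0" by fact
    fix y' assume y': "y' \<in> f ` S" "dist y' y < d"
    then obtain x where x: "x \<in> S" "y' = f x" by auto
    obtain u where u: "u \<in> S" "f u = a (f x)" "x = b u" using ab(5) x(1) by blast
    have "norm (f u) < d1" using d(2)[of "f x"] y'(2) x u(2) x0(2) by simp
    then have "norm u < \<epsilon>" using d1(2) u(1) by blast
    then have "dist (b u) x0 < e" using eps(2) by simp
    then show "dist (inv_into S f y') (inv_into S f y) < e"
      using x x0 u(3) inj by (simp add: inv_into_f_f)
  qed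
qed


lemma cont_at_of_on: "continuous_on UNIV f \<Longrightarrow> continuous (at x) f"
  by (simp add: continuous_on_eq_continuous_at)

lemma hom_facts:
  assumes gG: "graded_group G \<delta>G" and gM: "graded_group M \<delta>M" and hT: "h_hom G \<delta>G M \<delta>M T"
  shows "group_hom G M T" "T 0 = 0" "\<And>x y. T (x \<otimes>\<^bsub>G\<^esub> y) = T x \<otimes>\<^bsub>M\<^esub> T y"
    "\<And>x. T (inv\<^bsub>G\<^esub> x) = inv\<^bsub>M\<^esub> T x" "continuous_on UNIV T"
    "\<And>r x. r > 0 \<Longrightarrow> T (\<delta>G r x) = \<delta>M r (T x)"
proof -
  show gh: "group_hom G M T" using gg_facts[OF gG] gg_facts[OF gM] hT
    unfolding h_hom_def group_hom_def group_hom_axioms_def by blast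
  show "T 0 = 0" using group_hom.hom_one[OF gh] gg_one[OF gG] gg_one[OF gM] by simp
  show "T (x \<otimes>\<^bsub>G\<^esub> y) = T x \<otimes>\<^bsub>M\<^esub> T y" for x y
    using group_hom.hom_mult[OF gh] gg_facts(2)[OF gG] by simp
  show "T (inv\<^bsub>G\<^esub> x) = inv\<^bsub>M\<^esub> T x" for x
    using group_hom.hom_inv[OF gh] gg_facts(2)[OF gG] by simp
  show "continuous_on UNIV T" using hT gg_facts(2)[OF gG] unfolding h_hom_def by simp
  show "T (\<delta>G r x) = \<delta>M r (T x)" if "r > 0" for r x
    using hT gg_facts(2)[OF gG] that unfolding h_hom_def by simp
qed

lemma T_inv_cont:
  assumes gG: "graded_group G \<delta>G" and gM: "graded_group M \<delta>M" and hT: "h_hom G \<delta>G M \<delta>M T"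
    and inj: "inj T"
  shows "continuous_on (range T) (inv_into UNIV T)"
proof (rule inv_cont_gen[OF inj])
  note hf = hom_facts[OF gG gM hT]
  obtain CG where CG: "CG > 0" "\<And>r x. 0 < r \<Longrightarrow> r \<le> 1 \<Longrightarrow> norm (\<delta>G r x) \<le> r * CG * norm x"
    using gg_facts(8)[OF gG] by blast
  obtain CM where CM: "CM > 0" "\<And>r x. 0 < r \<Longrightarrow> r \<le> 1 \<Longrightarrow> norm (\<delta>M r x) \<le> r * CM * norm x"
    using gg_facts(8)[OF gM] by blast
  have CM': "norm (\<delta>M r y) \<le> CM * norm y" if "0 < r" "r \<le> 1" for r y
  proof -
    have "norm (\<delta>M r y) \<le> r * CM * norm y" by (rule CM(2)[OF that])
    also have "\<dots> \<le> 1 * CM * norm y" using that CM(1) by (intro mult_right_mono) auto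
    finally show ?thesis by simp
  qed
  show "\<exists>d>0. \<forall>u\<in>UNIV. norm (T u) < d \<longrightarrow> norm u < \<epsilon>" if "\<epsilon> > 0" for \<epsilon>
    by (rule inv_cont_at0[where dA=\<delta>G and dB=\<delta>M, OF closed_UNIV UNIV_I _ inj hf(2) UNIV_I hf(6)
          gg_facts(7)[OF gG] gg_facts(6)[OF gG] CG CM(1) CM' that]) (use hf(5) in auto)
  fix x0
  have mG: "continuous_on UNIV (\<lambda>(x,y). x \<otimes>\<^bsub>G\<^esub> y)" and mM: "continuous_on UNIV (\<lambda>(x,y). x \<otimes>\<^bsub>M\<^esub> y)"
    using gg_facts(3) gG gM by blast+
  have grG: "group G" and grM: "group M" using gg_facts gG gM by blast+
  have cG: "carrier G = UNIV" and cM: "carrier M = UNIV" using gg_facts gG gM by blast+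
  show "\<exists>a b. continuous (at (T x0)) a \<and> a (T x0) = 0 \<and> continuous (at 0) b \<and> b 0 = x0 \<and>
     (\<forall>x\<in>UNIV. \<exists>u\<in>UNIV. T u = a (T x) \<and> x = b u)"
  proof (intro exI conjI ballI)
    show "continuous (at (T x0)) (\<lambda>y. inv\<^bsub>M\<^esub> (T x0) \<otimes>\<^bsub>M\<^esub> y)"
      by (intro cont_at_of_on cont_mult_comp[OF mM] continuous_intros)
    show "continuous (at 0) (\<lambda>u. x0 \<otimes>\<^bsub>G\<^esub> u)"
      by (intro cont_at_of_on cont_mult_comp[OF mG] continuous_intros)
    show "inv\<^bsub>M\<^esub> (T x0) \<otimes>\<^bsub>M\<^esub> T x0 = 0"
      using group.l_inv[OF grM] gg_one[OF gM] cM by simp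
    show "x0 \<otimes>\<^bsub>G\<^esub> 0 = x0"
      using monoid.r_one[OF group.is_monoid[OF grG]] gg_one[OF gG] cG by (metis UNIV_I)
    fix x
    show "\<exists>u\<in>UNIV. T u = inv\<^bsub>M\<^esub> T x0 \<otimes>\<^bsub>M\<^esub> T x \<and> x = x0 \<otimes>\<^bsub>G\<^esub> u"
    proof (intro bexI[of _ "inv\<^bsub>G\<^esub> x0 \<otimes>\<^bsub>G\<^esub> x"] conjI)
      show "T (inv\<^bsub>G\<^esub> x0 \<otimes>\<^bsub>G\<^esub> x) = inv\<^bsub>M\<^esub> T x0 \<otimes>\<^bsub>M\<^esub> T x" using hf by simp
      show "x = x0 \<otimes>\<^bsub>G\<^esub> (inv\<^bsub>G\<^esub> x0 \<otimes>\<^bsub>G\<^esub> x)"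
        using group.inv_solve_left[OF grG] cG by (metis UNIV_I)
    qed simp
  qed
qed


lemma incl_hhom:
  assumes "H \<subseteq> carrier M"
  shows "h_hom (M\<lparr>carrier := H\<rparr>) \<delta> M \<delta> (\<lambda>x. x)"
  using assms unfolding h_hom_def hom_def by (auto intro: continuous_on_id)

lemma part_23:
  assumes gG: "graded_group G \<delta>G" and gM: "graded_group M \<delta>M" and hT: "h_hom G \<delta>G M \<delta>M T"
    and inj: "inj T" and H: "H = T ` carrier G"
  shows "(\<exists>p. h_epi M \<delta>M (M\<lparr>carrier := H\<rparr>) \<delta>M p \<and> (\<forall>h\<in>H. p h = h)) \<longleftrightarrow> h_mono G \<delta>G M \<delta>M T"
proof -
  note hf = hom_facts[OF gG gM hT]
  have cG: "carrier G = UNIV" and cM: "carrier M = UNIV" using gg_facts gG gM by blast+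
  have H': "H = range T" using H cG by simp
  have incl: "h_hom (M\<lparr>carrier := H\<rparr>) \<delta>M M \<delta>M (\<lambda>x. x)" using cM by (intro incl_hhom) simp
  show ?thesis
  proof
    assume "\<exists>p. h_epi M \<delta>M (M\<lparr>carrier := H\<rparr>) \<delta>M p \<and> (\<forall>h\<in>H. p h = h)"
    then obtain p where hp: "h_hom M \<delta>M (M\<lparr>carrier := H\<rparr>) \<delta>M p" and pid: "\<forall>h\<in>H. p h = h"
      unfolding h_epi_def by blast
    have pH: "p x \<in> H" for x using hp cM unfolding h_hom_def hom_def by auto
    have pm: "p (x \<otimes>\<^bsub>M\<^esub> y) = p x \<otimes>\<^bsub>M\<^esub> p y" for x y using hp cM unfolding h_hom_def hom_def by auto
    have pc: "continuous_on UNIV p" using hp cM unfolding h_hom_def by auto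
    have pd: "p (\<delta>M r x) = \<delta>M r (p x)" if "r > 0" for r x using hp cM that unfolding h_hom_def by auto
    define Ti where "Ti = inv_into UNIV T"
    have TiT: "Ti (T x) = x" for x unfolding Ti_def using inj by simp
    have TTi: "y \<in> H \<Longrightarrow> T (Ti y) = y" for y unfolding Ti_def H' by (simp add: f_inv_into_f)
    define g where "g = (\<lambda>x. Ti (p x))"
    have "h_hom M \<delta>M G \<delta>G g"
      unfolding h_hom_def
    proof (intro conjI ballI allI impI)
      show "g \<in> hom M G" unfolding hom_def
      proof (intro CollectI conjI ballI)
        show "g \<in> carrier M \<rightarrow> carrier G" using cG by simp
        fix x y
        obtain a where a: "p x = T a" using pH H' by blast
        obtain b where b: "p y = T b" using pH H' by blast
        show "g (x \<otimes>\<^bsub>M\<^esub> y) = g x \<otimes>\<^bsub>G\<^esub> g y"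
          unfolding g_def pm a b hf(3)[symmetric] TiT ..
      qed
      show "continuous_on (carrier M) g" unfolding g_def cM
        by (rule continuous_on_compose2[OF T_inv_cont[OF gG gM hT inj] pc, folded Ti_def])
           (use pH H' in auto)
      fix r x assume r: "(0::real) < r"
      obtain a where a: "p x = T a" using pH H' by blast
      show "g (\<delta>M r x) = \<delta>G r (g x)"
        unfolding g_def pd[OF r] a hf(6)[OF r, symmetric] TiT ..
    qed
    moreover have "\<forall>x\<in>carrier G. g (T x) = x"
      unfolding g_def using pid H TiT by auto
    ultimately show "h_mono G \<delta>G M \<delta>M T" unfolding h_mono_def using hT by blast
  next
    assume "h_mono G \<delta>G M \<delta>M T"
    then obtain g where hg: "h_hom M \<delta>M G \<delta>G g" and gT: "\<forall>x\<in>carrier G. g (T x) = x"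
      unfolding h_mono_def by blast
    note gf = hom_facts[OF gM gG hg]
    define p where "p = (\<lambda>x. T (g x))"
    have "h_hom M \<delta>M (M\<lparr>carrier := H\<rparr>) \<delta>M p"
      unfolding h_hom_def
    proof (intro conjI ballI allI impI)
      show "p \<in> hom M (M\<lparr>carrier := H\<rparr>)" unfolding hom_def p_def
        using H' hf(3) gf(3) by auto
      show "continuous_on (carrier M) p" unfolding p_def cM
        by (rule continuous_on_compose2[OF hf(5) gf(5)]) auto
      show "p (\<delta>M r x) = \<delta>M r (p x)" if "(0::real) < r" for r x
        unfolding p_def using gf(6)[OF that] hf(6)[OF that] by simp
    qed
    moreover have "\<forall>h\<in>H. p h = h" unfolding p_def using H gT by auto
    ultimately show "\<exists>p. h_epi M \<delta>M (M\<lparr>carrier := H\<rparr>) \<delta>M p \<and> (\<forall>h\<in>H. p h = h)"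
      unfolding h_epi_def using incl H by auto
  qed
qed


lemma grp_simps:
  assumes "group M" "carrier M = UNIV"
  shows "\<And>x y z. (x \<otimes>\<^bsub>M\<^esub> y) \<otimes>\<^bsub>M\<^esub> z = x \<otimes>\<^bsub>M\<^esub> (y \<otimes>\<^bsub>M\<^esub> z)"
    "\<And>x. \<one>\<^bsub>M\<^esub> \<otimes>\<^bsub>M\<^esub> x = x" "\<And>x. x \<otimes>\<^bsub>M\<^esub> \<one>\<^bsub>M\<^esub> = x"
    "\<And>x. inv\<^bsub>M\<^esub> x \<otimes>\<^bsub>M\<^esub> x = \<one>\<^bsub>M\<^esub>" "\<And>x. x \<otimes>\<^bsub>M\<^esub> inv\<^bsub>M\<^esub> x = \<one>\<^bsub>M\<^esub>"
    "inv\<^bsub>M\<^esub> \<one>\<^bsub>M\<^esub> = \<one>\<^bsub>M\<^esub>"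
    "\<And>x y. x \<otimes>\<^bsub>M\<^esub> (inv\<^bsub>M\<^esub> x \<otimes>\<^bsub>M\<^esub> y) = y"
    "\<And>x y. inv\<^bsub>M\<^esub> x \<otimes>\<^bsub>M\<^esub> (x \<otimes>\<^bsub>M\<^esub> y) = y"
    "\<And>x y. inv\<^bsub>M\<^esub> (x \<otimes>\<^bsub>M\<^esub> y) = inv\<^bsub>M\<^esub> y \<otimes>\<^bsub>M\<^esub> inv\<^bsub>M\<^esub> x"
    "\<And>x. inv\<^bsub>M\<^esub> (inv\<^bsub>M\<^esub> x) = x"
proof -
  interpret group M by fact
  show "\<And>x y z. (x \<otimes>\<^bsub>M\<^esub> y) \<otimes>\<^bsub>M\<^esub> z = x \<otimes>\<^bsub>M\<^esub> (y \<otimes>\<^bsub>M\<^esub> z)"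
    "\<And>x. \<one>\<^bsub>M\<^esub> \<otimes>\<^bsub>M\<^esub> x = x" "\<And>x. x \<otimes>\<^bsub>M\<^esub> \<one>\<^bsub>M\<^esub> = x"
    "\<And>x. inv\<^bsub>M\<^esub> x \<otimes>\<^bsub>M\<^esub> x = \<one>\<^bsub>M\<^esub>" "\<And>x. x \<otimes>\<^bsub>M\<^esub> inv\<^bsub>M\<^esub> x = \<one>\<^bsub>M\<^esub>"
    "inv\<^bsub>M\<^esub> \<one>\<^bsub>M\<^esub> = \<one>\<^bsub>M\<^esub>"
    "\<And>x y. inv\<^bsub>M\<^esub> (x \<otimes>\<^bsub>M\<^esub> y) = inv\<^bsub>M\<^esub> y \<otimes>\<^bsub>M\<^esub> inv\<^bsub>M\<^esub> x"
    "\<And>x. inv\<^bsub>M\<^esub> (inv\<^bsub>M\<^esub> x) = x"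
    using assms(2) by (auto simp: m_assoc inv_mult_group)
  show "\<And>x y. x \<otimes>\<^bsub>M\<^esub> (inv\<^bsub>M\<^esub> x \<otimes>\<^bsub>M\<^esub> y) = y"
    "\<And>x y. inv\<^bsub>M\<^esub> x \<otimes>\<^bsub>M\<^esub> (x \<otimes>\<^bsub>M\<^esub> y) = y"
    using assms(2) by (auto simp flip: m_assoc)
qed


lemma part_21:
  assumes gG: "graded_group G \<delta>G" and gM: "graded_group M \<delta>M" and hT: "h_hom G \<delta>G M \<delta>M T"
    and H: "H = T ` carrier G"
    and ep: "h_epi M \<delta>M (M\<lparr>carrier := H\<rparr>) \<delta>M p" and pid: "\<forall>h\<in>H. p h = h"
  shows "\<exists>N. homogeneous_subgroup M \<delta>M N \<and> N \<lhd> M \<and> complementary M N H"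
proof -
  note hf = hom_facts[OF gG gM hT]
  have cG: "carrier G = UNIV" and cM: "carrier M = UNIV" using gg_facts gG gM by blast+
  have grM: "group M" using gg_facts gM by blast
  note gs = grp_simps[OF grM cM]
  have H': "H = range T" using H cG by simp
  have hp: "h_hom M \<delta>M (M\<lparr>carrier := H\<rparr>) \<delta>M p" using ep unfolding h_epi_def by blast
  have pH: "p x \<in> H" for x using hp cM unfolding h_hom_def hom_def by auto
  have pm: "p (x \<otimes>\<^bsub>M\<^esub> y) = p x \<otimes>\<^bsub>M\<^esub> p y" for x y using hp cM unfolding h_hom_def hom_def by auto
  have pc: "continuous_on UNIV p" using hp cM unfolding h_hom_def by auto
  have pd: "p (\<delta>M r x) = \<delta>M r (p x)" if "r > 0" for r x using hp cM that unfolding h_hom_def by auto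
  have oneH: "\<one>\<^bsub>M\<^esub> \<in> H" using H' hf(2) gg_one[OF gG] gg_one[OF gM] by (metis rangeI)
  have invH: "inv\<^bsub>M\<^esub> h \<in> H" if "h \<in> H" for h using that H' hf(4) by (metis image_iff rangeI)
  have p1: "p \<one>\<^bsub>M\<^esub> = \<one>\<^bsub>M\<^esub>" using pid oneH by blast
  define N where "N = {x. p x = \<one>\<^bsub>M\<^esub>}"
  have pinvN: "p (inv\<^bsub>M\<^esub> x) = \<one>\<^bsub>M\<^esub>" if "x \<in> N" for x
  proof -
    have "p (inv\<^bsub>M\<^esub> x) \<otimes>\<^bsub>M\<^esub> p x = \<one>\<^bsub>M\<^esub>" using pm[symmetric] gs p1 by simp
    then show ?thesis using that gs unfolding N_def by simp
  qed
  have sub: "subgroup N M"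
    by (rule subgroup.intro) (auto simp: N_def cM pm gs p1 pinvN[unfolded N_def])
  have nor: "N \<lhd> M"
    unfolding group.normal_inv_iff[OF grM]
  proof (intro conjI sub ballI)
    fix x h assume "h \<in> N"
    then have "p (x \<otimes>\<^bsub>M\<^esub> h \<otimes>\<^bsub>M\<^esub> inv\<^bsub>M\<^esub> x) = p (x \<otimes>\<^bsub>M\<^esub> inv\<^bsub>M\<^esub> x)"
      unfolding pm N_def by (simp add: gs)
    then show "x \<otimes>\<^bsub>M\<^esub> h \<otimes>\<^bsub>M\<^esub> inv\<^bsub>M\<^esub> x \<in> N" unfolding N_def using gs p1 by simp
  qed
  have cl: "closed N" unfolding N_def by (rule closed_Collect_eq[OF pc continuous_on_const])
  define r where "r = (\<lambda>m. m \<otimes>\<^bsub>M\<^esub> inv\<^bsub>M\<^esub> (p m))"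
  have rN: "r m \<in> N" for m
    unfolding r_def N_def using pid invH[OF pH[of m]] gs by (simp add: pm)
  have rid: "r n = n" if "n \<in> N" for n using that unfolding r_def N_def by (simp add: gs)
  have rc: "continuous_on UNIV r" unfolding r_def
    by (intro cont_mult_comp[OF gg_facts(3)[OF gM]] continuous_intros
        continuous_on_compose2[OF gg_facts(4)[OF gM] pc]) auto
  have "N retract_of UNIV"
    unfolding retract_of_def retraction_def using rN rid rc by auto
  then have ctr: "contractible N"
    by (rule retract_of_contractible[OF convex_imp_contractible[OF convex_UNIV]])
  have dil: "\<delta>M s ` N \<subseteq> N" if "s > 0" for s
  proof -
    have gh: "group_hom M M (\<delta>M s)" using gg_facts(5)[OF gM that] grM
      unfolding group_hom_def group_hom_axioms_def by blast
    show ?thesis unfolding N_def using pd[OF that] group_hom.hom_one[OF gh] by auto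
  qed
  have hs: "homogeneous_subgroup M \<delta>M N"
    unfolding homogeneous_subgroup_def
    using sub cl ctr contractible_imp_connected contractible_imp_simply_connected dil by blast
  have comp: "complementary M N H"
    unfolding complementary_def
  proof
    show "N <#>\<^bsub>M\<^esub> H = carrier M"
    proof
      show "N <#>\<^bsub>M\<^esub> H \<subseteq> carrier M" using cM by simp
      show "carrier M \<subseteq> N <#>\<^bsub>M\<^esub> H"
      proof
        fix m
        have "m = r m \<otimes>\<^bsub>M\<^esub> p m" unfolding r_def by (simp add: gs)
        then show "m \<in> N <#>\<^bsub>M\<^esub> H" unfolding set_mult_def using rN pH by blast
      qed
    qed
    show "N \<inter> H = {\<one>\<^bsub>M\<^esub>}" using pid oneH p1 unfolding N_def by auto
  qed
  show ?thesis using hs nor comp by blast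
qed


lemma part_12:
  fixes G :: "'g::euclidean_space monoid" and \<delta>G :: "real \<Rightarrow> 'g \<Rightarrow> 'g"
    and M :: "'m::euclidean_space monoid" and \<delta>M :: "real \<Rightarrow> 'm \<Rightarrow> 'm"
    and T :: "'g \<Rightarrow> 'm" and H :: "'m set"
  assumes gG: "graded_group G \<delta>G" and gM: "graded_group M \<delta>M" and hT: "h_hom G \<delta>G M \<delta>M T"
    and inj: "inj T" and H: "H = T ` carrier G"
    and hsN: "homogeneous_subgroup M \<delta>M N" and nor: "N \<lhd> M" and comp: "complementary M N H"
  shows "\<exists>p. h_epi M \<delta>M (M\<lparr>carrier := H\<rparr>) \<delta>M p \<and> (\<forall>h\<in>H. p h = h)"
proof -
  note hf = hom_facts[OF gG gM hT]
  have cG: "carrier G = UNIV" and cM: "carrier M = UNIV" using gg_facts gG gM by blast+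
  have grM: "group M" and grG: "group G" using gg_facts gM gG by blast+
  note gs = grp_simps[OF grM cM]
  note gsG = grp_simps[OF grG cG]
  have one0: "\<one>\<^bsub>M\<^esub> = 0" "\<one>\<^bsub>G\<^esub> = 0" using gg_one gG gM by blast+
  have H': "H = range T" using H cG by simp
  have sub: "subgroup N M" using hsN unfolding homogeneous_subgroup_def by blast
  have N1: "\<one>\<^bsub>M\<^esub> \<in> N" using subgroup.one_closed[OF sub] .
  have Nm: "a \<otimes>\<^bsub>M\<^esub> b \<in> N" if "a \<in> N" "b \<in> N" for a b using subgroup.m_closed[OF sub] that .
  have Ni: "inv\<^bsub>M\<^esub> a \<in> N" if "a \<in> N" for a using subgroup.m_inv_closed[OF sub] that .
  have Nc: "x \<otimes>\<^bsub>M\<^esub> h \<otimes>\<^bsub>M\<^esub> inv\<^bsub>M\<^esub> x \<in> N" if "h \<in> N" for x h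
    using normal.inv_op_closed2[OF nor] that cM by simp
  have Nd: "\<delta>M r n \<in> N" if "r > 0" "n \<in> N" for r n
    using hsN that unfolding homogeneous_subgroup_def by blast
  have NH: "N \<inter> H = {\<one>\<^bsub>M\<^esub>}" and NHM: "N <#>\<^bsub>M\<^esub> H = carrier M"
    using comp unfolding complementary_def by blast+
  have dhom: "\<delta>M r (a \<otimes>\<^bsub>M\<^esub> b) = \<delta>M r a \<otimes>\<^bsub>M\<^esub> \<delta>M r b" if "r > 0" for r a b
    using gg_facts(5)[OF gM that] cM unfolding hom_def by auto
  define S where "S = N \<times> (UNIV :: 'g set)"
  define f where "f = (\<lambda>z::'m \<times> 'g. fst z \<otimes>\<^bsub>M\<^esub> T (snd z))"
  have decomp: "\<exists>n\<in>N. \<exists>x. m = n \<otimes>\<^bsub>M\<^esub> T x" for m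
  proof -
    have "m \<in> N <#>\<^bsub>M\<^esub> H" using NHM cM by simp
    then show ?thesis unfolding set_mult_def H' by blast
  qed
  have fS: "f ` S = UNIV"
  proof -
    have "m \<in> f ` S" for m using decomp[of m] unfolding f_def S_def by force
    then show ?thesis by blast
  qed
  have injf: "inj_on f S"
  proof (rule inj_onI)
    fix z z' assume z: "z \<in> S" "z' \<in> S" and e: "f z = f z'"
    obtain n x n' x' where zz: "z = (n, x)" "z' = (n', x')" "n \<in> N" "n' \<in> N"
      using z unfolding S_def by auto
    have e': "n \<otimes>\<^bsub>M\<^esub> T x = n' \<otimes>\<^bsub>M\<^esub> T x'" using e zz unfolding f_def by simp
    define k where "k = inv\<^bsub>M\<^esub> n' \<otimes>\<^bsub>M\<^esub> n"
    have kN: "k \<in> N" unfolding k_def using zz Nm Ni by blast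
    have "k \<otimes>\<^bsub>M\<^esub> T x = T x'" unfolding k_def using e' by (simp add: gs)
    then have "k = T x' \<otimes>\<^bsub>M\<^esub> inv\<^bsub>M\<^esub> T x" by (metis gs(1,3,5))
    also have "\<dots> = T (x' \<otimes>\<^bsub>G\<^esub> inv\<^bsub>G\<^esub> x)" using hf by simp
    finally have "k \<in> H" using H' by simp
    then have k1: "k = \<one>\<^bsub>M\<^esub>" using kN NH by blast
    then have nn: "n = n'" unfolding k_def by (metis gs(3,7))
    then have "T x = T x'" using e' by (metis gs(8))
    then have "x = x'" using inj by (simp add: inj_def)
    then show "z = z'" using zz nn by simp
  qed
  define \<Phi> where "\<Phi> = inv_into S f"
  have \<Phi>f: "\<Phi> (f z) = z" if "z \<in> S" for z unfolding \<Phi>_def using injf that by simp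
  define p where "p = (\<lambda>m. T (snd (\<Phi> m)))"
  have pdec: "p (n \<otimes>\<^bsub>M\<^esub> T x) = T x" if "n \<in> N" for n x
    using \<Phi>f[of "(n, x)"] that unfolding p_def f_def S_def by simp
  obtain CG where CG: "CG > 0" "\<And>r x. 0 < r \<Longrightarrow> r \<le> 1 \<Longrightarrow> norm (\<delta>G r x) \<le> r * CG * norm x"
    using gg_facts(8)[OF gG] by blast
  obtain CM where CM: "CM > 0" "\<And>r x. 0 < r \<Longrightarrow> r \<le> 1 \<Longrightarrow> norm (\<delta>M r x) \<le> r * CM * norm x"
    using gg_facts(8)[OF gM] by blast
  have CM': "norm (\<delta>M r y) \<le> CM * norm y" if "0 < r" "r \<le> 1" for r y
  proof -
    have "norm (\<delta>M r y) \<le> r * CM * norm y" by (rule CM(2)[OF that])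
    also have "\<dots> \<le> 1 * CM * norm y" using that CM(1) by (intro mult_right_mono) auto
    finally show ?thesis by simp
  qed
  define dA where "dA = (\<lambda>r (z::'m \<times> 'g). (\<delta>M r (fst z), \<delta>G r (snd z)))"
  have CA: "norm (dA r z) \<le> r * (2 * (CM + CG)) * norm z" if r: "0 < r" "r \<le> 1" for r z
  proof -
    have "norm (dA r z) \<le> norm (\<delta>M r (fst z)) + norm (\<delta>G r (snd z))"
      unfolding dA_def by (rule norm_Pair_le)
    also have "\<dots> \<le> r * CM * norm (fst z) + r * CG * norm (snd z)"
      using CM(2)[OF r] CG(2)[OF r] by (intro add_mono) auto
    also have "\<dots> \<le> r * CM * norm z + r * CG * norm z"
      using r CM(1) CG(1) norm_fst_le[of "fst z" "snd z"] norm_snd_le[of "snd z" "fst z"]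
      by (intro add_mono mult_left_mono) auto
    also have "\<dots> \<le> r * (2 * (CM + CG)) * norm z"
      using r CM(1) CG(1) by (simp add: algebra_simps)
    finally show ?thesis .
  qed
  have mG: "continuous_on UNIV (\<lambda>(x,y). x \<otimes>\<^bsub>G\<^esub> y)" and mM: "continuous_on UNIV (\<lambda>(x,y). x \<otimes>\<^bsub>M\<^esub> y)"
    using gg_facts(3) gG gM by blast+
  have iM: "continuous_on UNIV (\<lambda>x. inv\<^bsub>M\<^esub> x)" using gg_facts(4) gM by blast
  have fc: "continuous_on UNIV f" unfolding f_def
    by (intro cont_mult_comp[OF mM] continuous_intros continuous_on_compose2[OF hf(5)]) auto
  have at0: "\<exists>d>0. \<forall>u\<in>S. norm (f u) < d \<longrightarrow> norm u < \<epsilon>" if "\<epsilon> > 0" for \<epsilon>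
  proof (rule inv_cont_at0[where dA=dA and dB=\<delta>M and CA="2 * (CM + CG)" and CB=CM])
    show "closed S" unfolding S_def using hsN unfolding homogeneous_subgroup_def
      by (intro closed_Times) auto
    show "0 \<in> S" unfolding S_def using N1 one0 by (simp add: zero_prod_def)
    show "continuous_on S f" using fc by (rule continuous_on_subset) simp
    show "inj_on f S" by fact
    show "f 0 = 0" unfolding f_def using hf(2) gs(2) one0 by (simp add: zero_prod_def)
    show "dA r x \<in> S" if "0 < r" "r \<le> 1" "x \<in> S" for r x
      using that Nd unfolding dA_def S_def by auto
    show "f (dA r x) = \<delta>M r (f x)" if "0 < r" "r \<le> 1" "x \<in> S" for r x
      unfolding dA_def f_def using that hf(6) dhom by simp
    show "continuous_on {0<..1} (\<lambda>r. dA r x)" for x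
      unfolding dA_def by (intro continuous_on_Pair gg_facts(7)[OF gM] gg_facts(7)[OF gG])
    show "dA 1 x = x" for x unfolding dA_def using gg_facts(6)[OF gM] gg_facts(6)[OF gG] by simp
    show "0 < 2 * (CM + CG)" using CM CG by simp
  qed (use CA CM' CM(1) that in auto)
  have \<Phi>c: "continuous_on UNIV \<Phi>"
    unfolding \<Phi>_def fS[symmetric]
  proof (rule inv_cont_gen[OF injf at0])
    fix z0 assume z0: "z0 \<in> S"
    obtain n0 g0 where zz: "z0 = (n0, g0)" "n0 \<in> N" using z0 unfolding S_def by auto
    show "\<exists>a b. continuous (at (f z0)) a \<and> a (f z0) = 0 \<and> continuous (at 0) b \<and> b 0 = z0 \<and>
       (\<forall>x\<in>S. \<exists>u\<in>S. f u = a (f x) \<and> x = b u)"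
    proof (intro exI conjI ballI)
      show "continuous (at (f z0)) (\<lambda>y. inv\<^bsub>M\<^esub> (f z0) \<otimes>\<^bsub>M\<^esub> y)"
        by (intro cont_at_of_on cont_mult_comp[OF mM] continuous_intros)
      show "inv\<^bsub>M\<^esub> (f z0) \<otimes>\<^bsub>M\<^esub> f z0 = 0" using gs one0 by simp
      show "continuous (at 0) (\<lambda>u. (n0 \<otimes>\<^bsub>M\<^esub> ((T g0 \<otimes>\<^bsub>M\<^esub> fst u) \<otimes>\<^bsub>M\<^esub> inv\<^bsub>M\<^esub> (T g0)), g0 \<otimes>\<^bsub>G\<^esub> snd u))"
        by (intro cont_at_of_on continuous_on_Pair cont_mult_comp[OF mM] cont_mult_comp[OF mG]
            continuous_intros)
      show "(n0 \<otimes>\<^bsub>M\<^esub> ((T g0 \<otimes>\<^bsub>M\<^esub> fst (0::'m\<times>'g)) \<otimes>\<^bsub>M\<^esub> inv\<^bsub>M\<^esub> (T g0)), g0 \<otimes>\<^bsub>G\<^esub> snd (0::'m\<times>'g)) = z0"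
        using zz gs gsG one0 by (simp add: zero_prod_def)
      fix z assume z: "z \<in> S"
      obtain n x where zz': "z = (n, x)" "n \<in> N" using z unfolding S_def by auto
      define u where "u = ((inv\<^bsub>M\<^esub> (T g0) \<otimes>\<^bsub>M\<^esub> (inv\<^bsub>M\<^esub> n0 \<otimes>\<^bsub>M\<^esub> n)) \<otimes>\<^bsub>M\<^esub> inv\<^bsub>M\<^esub> (inv\<^bsub>M\<^esub> (T g0)),
                          inv\<^bsub>G\<^esub> g0 \<otimes>\<^bsub>G\<^esub> x)"
      show "\<exists>u\<in>S. f u = inv\<^bsub>M\<^esub> (f z0) \<otimes>\<^bsub>M\<^esub> f z \<and>
          z = (n0 \<otimes>\<^bsub>M\<^esub> ((T g0 \<otimes>\<^bsub>M\<^esub> fst u) \<otimes>\<^bsub>M\<^esub> inv\<^bsub>M\<^esub> (T g0)), g0 \<otimes>\<^bsub>G\<^esub> snd u)"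
      proof (intro bexI[of _ u] conjI)
        show "u \<in> S" unfolding u_def S_def using Nc Nm Ni zz zz' by auto
        show "f u = inv\<^bsub>M\<^esub> (f z0) \<otimes>\<^bsub>M\<^esub> f z"
          unfolding u_def f_def using zz zz' hf(3,4) gs by simp
        show "z = (n0 \<otimes>\<^bsub>M\<^esub> ((T g0 \<otimes>\<^bsub>M\<^esub> fst u) \<otimes>\<^bsub>M\<^esub> inv\<^bsub>M\<^esub> (T g0)), g0 \<otimes>\<^bsub>G\<^esub> snd u)"
          unfolding u_def using zz zz' gs gsG by simp
      qed
    qed
  qed
  have pc: "continuous_on UNIV p" unfolding p_def
    by (intro continuous_on_compose2[OF hf(5)] continuous_intros continuous_on_compose2[OF _ \<Phi>c]) auto
  have hp: "h_hom M \<delta>M (M\<lparr>carrier := H\<rparr>) \<delta>M p"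
    unfolding h_hom_def
  proof (intro conjI ballI allI impI)
    show "p \<in> hom M (M\<lparr>carrier := H\<rparr>)" unfolding hom_def
    proof (intro CollectI conjI ballI)
      show "p \<in> carrier M \<rightarrow> carrier (M\<lparr>carrier := H\<rparr>)" unfolding p_def H' by simp
      fix m1 m2
      obtain n1 x1 where 1: "n1 \<in> N" "m1 = n1 \<otimes>\<^bsub>M\<^esub> T x1" using decomp by blast
      obtain n2 x2 where 2: "n2 \<in> N" "m2 = n2 \<otimes>\<^bsub>M\<^esub> T x2" using decomp by blast
      have "m1 \<otimes>\<^bsub>M\<^esub> m2 = (n1 \<otimes>\<^bsub>M\<^esub> (T x1 \<otimes>\<^bsub>M\<^esub> n2 \<otimes>\<^bsub>M\<^esub> inv\<^bsub>M\<^esub> T x1)) \<otimes>\<^bsub>M\<^esub> T (x1 \<otimes>\<^bsub>G\<^esub> x2)"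
        using 1 2 hf(3) gs by simp
      moreover have "n1 \<otimes>\<^bsub>M\<^esub> (T x1 \<otimes>\<^bsub>M\<^esub> n2 \<otimes>\<^bsub>M\<^esub> inv\<^bsub>M\<^esub> T x1) \<in> N"
        using 1 2 Nm Nc by blast
      ultimately have "p (m1 \<otimes>\<^bsub>M\<^esub> m2) = T (x1 \<otimes>\<^bsub>G\<^esub> x2)" using pdec by simp
      then show "p (m1 \<otimes>\<^bsub>M\<^esub> m2) = p m1 \<otimes>\<^bsub>M\<lparr>carrier := H\<rparr>\<^esub> p m2"
        using 1 2 pdec hf(3) by simp
    qed
    show "continuous_on (carrier M) p" using pc cM by simp
    fix r m assume r: "(0::real) < r"
    obtain n x where 1: "n \<in> N" "m = n \<otimes>\<^bsub>M\<^esub> T x" using decomp by blast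
    have "\<delta>M r m = \<delta>M r n \<otimes>\<^bsub>M\<^esub> T (\<delta>G r x)" using 1 dhom[OF r] hf(6)[OF r] by simp
    then have "p (\<delta>M r m) = T (\<delta>G r x)" using pdec[OF Nd[OF r 1(1)]] by simp
    then show "p (\<delta>M r m) = \<delta>M r (p m)" using 1 pdec hf(6)[OF r] by simp
  qed
  have pid: "\<forall>h\<in>H. p h = h"
  proof
    fix h assume "h \<in> H"
    then obtain x where "h = T x" using H' by blast
    then have "h = \<one>\<^bsub>M\<^esub> \<otimes>\<^bsub>M\<^esub> T x" using gs by simp
    then show "p h = h" using pdec[OF N1, of x] \<open>h = T x\<close> by metis
  qed
  have incl: "h_hom (M\<lparr>carrier := H\<rparr>) \<delta>M M \<delta>M (\<lambda>x. x)" using cM by (intro incl_hhom) simp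
  show ?thesis unfolding h_epi_def using hp pid incl by auto
qed


theorem proposition7p18:
  fixes G :: "'g::euclidean_space monoid" and \<delta>G :: "real \<Rightarrow> 'g \<Rightarrow> 'g"
    and M :: "'m::euclidean_space monoid" and \<delta>M :: "real \<Rightarrow> 'm \<Rightarrow> 'm"
    and T :: "'g \<Rightarrow> 'm" and H :: "'m set"
  assumes "graded_group G \<delta>G" and "graded_group M \<delta>M"
    and "h_hom G \<delta>G M \<delta>M T" and "inj T"
    and "H = T ` carrier G"
  shows "((\<exists>N. homogeneous_subgroup M \<delta>M N \<and> N \<lhd> M \<and> complementary M N H)
           \<longleftrightarrow> (\<exists>p. h_epi M \<delta>M (M\<lparr>carrier := H\<rparr>) \<delta>M p \<and> (\<forall>h\<in>H. p h = h)))
       \<and> ((\<exists>p. h_epi M \<delta>M (M\<lparr>carrier := H\<rparr>) \<delta>M p \<and> (\<forall>h\<in>H. p h = h))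
           \<longleftrightarrow> h_mono G \<delta>G M \<delta>M T)"
proof -
  have e23: "(\<exists>p. h_epi M \<delta>M (M\<lparr>carrier := H\<rparr>) \<delta>M p \<and> (\<forall>h\<in>H. p h = h)) \<longleftrightarrow> h_mono G \<delta>G M \<delta>M T"
    by (rule part_23[OF assms])
  have e12: "(\<exists>N. homogeneous_subgroup M \<delta>M N \<and> N \<lhd> M \<and> complementary M N H)
           \<longleftrightarrow> (\<exists>p. h_epi M \<delta>M (M\<lparr>carrier := H\<rparr>) \<delta>M p \<and> (\<forall>h\<in>H. p h = h))"
    using part_12[OF assms] part_21[OF assms(1,2,3,5)] by blast
  show ?thesis using e12 e23 by blast
qed

end
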